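(* Let $X$ be a metric space, $\mathcal M=\{M_1,\dots,M_n\}\subset\mathcal P^f_{\mathrm{Cl}}(X)$, $\Sigma(\mathcal M)\ne\emptyset$ and $d\in\Omega(\mathcal M)$. Let $K_1,K_2\in\Sigma_d(\mathcal M)$ with $K_1\subset K_2$. Then every $K\in\mathcal P^f_{\mathrm{Cl}}(X)$ with $K_1\subset K\subset K_2$ belongs to $\Sigma_d(\mathcal M)$.
   Context: For a metric space $X$, $p\in X$, $A\subset X$: $|p\,A|=\inf_{a\in A}|p\,a|$ ($=\infty$ if $A=\emptyset$); for $0\le r<\infty$, $B_r(A)=\{p:|p\,A|\le r\}$. For nonempty $A,B$, $d_H(A,B)=\max\{\sup_{a\in A}|a\,B|,\sup_{b\in B}|b\,A|\}\in[0,\infty]$. $\mathcal P_{\mathrm{Cl}}(X)$ is the set of nonempty closed subsets of $X$ with $d_H$. A finiteness class of $\mathcal P_{\mathrm{Cl}}(X)$ is an equivalence class of the relation $A\sim B\iff d_H(A,B)<\infty$; $\mathcal P^f_{\mathrm{Cl}}(X)$ denotes a fixed finiteness class. For finite $\mathcal M=\{M_1,\dots,M_n\}\subset\mathcal P^f_{\mathrm{Cl}}(X)$, set $S_{\mathcal M}(Y)=\sum_{i=1}^n d_H(Y,M_i)$ for $Y\in\mathcal P^f_{\mathrm{Cl}}(X)$; $\Sigma(\mathcal M)$ is the set of all minimizers of $S_{\mathcal M}$ over $\mathcal P^f_{\mathrm{Cl}}(X)$. For $K\in\Sigma(\mathcal M)$, $d(K)=(d_H(K,M_1),\dots,d_H(K,M_n))$;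 $\Omega(\mathcal M)=\{d(K):K\in\Sigma(\mathcal M)\}$; for $d=(d_1,\dots,d_n)\in\Omega(\mathcal M)$, $\Sigma_d(\mathcal M)=\{K\in\Sigma(\mathcal M):d(K)=d\}$, partially ordered by inclusion; and $K_d=\bigcap_{i=1}^n B_{d_i}(M_i)$. *)

theory Defs
  imports "HOL-Analysis.Analysis"
begin

text \<open>Distance from a point to a set, with value infinity for the empty set.\<close>
definition pdist :: "'a::metric_space \<Rightarrow> 'a set \<Rightarrow> ereal" where
  "pdist p A = (INF a\<in>A. ereal (dist p a))"

definition cnbhd :: "real \<Rightarrow> 'a::metric_space set \<Rightarrow> 'a set" where
  "cnbhd r A = {p. pdist p A \<le> ereal r}"

definition hdist :: "'a::metric_space set \<Rightarrow> 'a set \<Rightarrow> ereal" where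
  "hdist A B = max (SUP a\<in>A. pdist a B) (SUP b\<in>B. pdist b A)"

definition PCl :: "'a::metric_space set set" where
  "PCl = {A. closed A \<and> A \<noteq> {}}"

definition finiteness_class :: "'a::metric_space set set \<Rightarrow> bool" where
  "finiteness_class C \<longleftrightarrow> (\<exists>A\<in>PCl. C = {B\<in>PCl. hdist A B < \<infinity>})"

text \<open>The family M = (M_1,...,M_n) is given as a list.\<close>
definition SM :: "'a::metric_space set list \<Rightarrow> 'a set \<Rightarrow> ereal" where
  "SM Ms Y = sum_list (map (\<lambda>Mi. hdist Y Mi) Ms)"

definition Sigma_min :: "'a::metric_space set set \<Rightarrow> 'a set list \<Rightarrow> 'a set set" where
  "Sigma_min C Ms = {K\<in>C. \<forall>Y\<in>C. SM Ms K \<le> SM Ms Y}"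

definition dvec :: "'a::metric_space set list \<Rightarrow> 'a set \<Rightarrow> ereal list" where
  "dvec Ms K = map (\<lambda>Mi. hdist K Mi) Ms"

definition Omega :: "'a::metric_space set set \<Rightarrow> 'a set list \<Rightarrow> ereal list set" where
  "Omega C Ms = dvec Ms ` Sigma_min C Ms"

definition Sigma_d :: "'a::metric_space set set \<Rightarrow> 'a set list \<Rightarrow> ereal list \<Rightarrow> 'a set set" where
  "Sigma_d C Ms d = {K\<in>Sigma_min C Ms. dvec Ms K = d}"

end

theory Submission
  imports Defs
begin
lemma pd_nonneg: "0 \<le> pdist p A" unfolding pdist_def by (rule INF_greatest) auto
lemma pd_tri: fixes p a :: "'a::metric_space" shows "pdist p C \<le> ereal (dist p a) + pdist a C"
proof -
  have "pdist p C - ereal (dist p a) \<le> pdist a C"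
    unfolding pdist_def[of a]
  proof (rule INF_greatest)
    fix c assume c: "c \<in> C"
    have "pdist p C \<le> ereal (dist p c)" unfolding pdist_def using c by (rule INF_lower)
    also have "\<dots> \<le> ereal (dist a c) + ereal (dist p a)" using dist_triangle[of p c a] by simp
    finally show "pdist p C - ereal (dist p a) \<le> ereal (dist a c)"
      by (simp add: ereal_minus_le)
  qed
  then show ?thesis by (simp add: ereal_minus_le add.commute)
qed
lemma pd_tri2: fixes p :: "'a::metric_space"
  assumes An: "A \<noteq> {}" shows "pdist p C \<le> pdist p A + (SUP a\<in>A. pdist a C)"
proof (cases "(SUP a\<in>A. pdist a C) = \<infinity>")
  case True
  then show ?thesis using pd_nonneg[of p A] by simp
next
  case False
  let ?s = "(SUP a\<in>A. pdist a C)"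
  have fs: "\<bar>?s\<bar> \<noteq> \<infinity>"
  proof -
    obtain a where "a \<in> A" using An by auto
    then have "pdist a C \<le> ?s" by (rule SUP_upper)
    then have "0 \<le> ?s" using pd_nonneg[of a C] by simp
    then show ?thesis using False by auto
  qed
  have "pdist p C - ?s \<le> pdist p A"
    unfolding pdist_def[of p A]
  proof (rule INF_greatest)
    fix a assume a: "a \<in> A"
    have "pdist p C \<le> ereal (dist p a) + pdist a C" by (rule pd_tri)
    also have "\<dots> \<le> ereal (dist p a) + ?s" using a by (intro add_left_mono SUP_upper)
    finally show "pdist p C - ?s \<le> ereal (dist p a)" using fs by (simp add: ereal_minus_le)
  qed
  then show ?thesis using fs by (simp add: ereal_minus_le)
qed
lemma hd_sym: "hdist A B = hdist B A" unfolding hdist_def by (simp add: max.commute)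
lemma hd_half: assumes "A \<noteq> {}" shows "(SUP b\<in>B. pdist b C) \<le> hdist B A + hdist A C"
proof (rule SUP_least)
  fix b assume b: "b \<in> B"
  have "pdist b C \<le> pdist b A + (SUP a\<in>A. pdist a C)" using assms by (rule pd_tri2)
  also have "\<dots> \<le> hdist B A + hdist A C" unfolding hdist_def
    using b by (intro add_mono max.coboundedI1 SUP_upper) simp_all
  finally show "pdist b C \<le> hdist B A + hdist A C" .
qed
lemma hd_tri: assumes "A \<noteq> {}" shows "hdist B C \<le> hdist B A + hdist A C"
proof -
  have "(SUP c\<in>C. pdist c B) \<le> hdist C A + hdist A B" using assms by (rule hd_half)
  then have 1: "(SUP c\<in>C. pdist c B) \<le> hdist B A + hdist A C" by (simp add: hd_sym add.commute)
  have 2: "(SUP b\<in>B. pdist b C) \<le> hdist B A + hdist A C" using assms by (rule hd_half)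
  show ?thesis using 1 2 unfolding hdist_def[of B C] by simp
qed
lemma hd_nonneg: assumes "A \<noteq> {}" shows "0 \<le> hdist A B"
proof -
  obtain a where a: "a \<in> A" using assms by auto
  have "0 \<le> pdist a B" by (rule pd_nonneg)
  also have "\<dots> \<le> (SUP a\<in>A. pdist a B)" using a by (rule SUP_upper)
  finally show ?thesis unfolding hdist_def by (rule max.coboundedI1)
qed
lemma sl_fin: fixes g :: "'b \<Rightarrow> ereal"
  shows "(\<And>x. x \<in> set xs \<Longrightarrow> 0 \<le> g x \<and> g x < \<infinity>) \<Longrightarrow> sum_list (map g xs) < \<infinity>"
  by (induction xs) auto

lemma list_eq: fixes f g :: "'b \<Rightarrow> ereal"
  assumes "\<And>x. x \<in> set xs \<Longrightarrow> 0 \<le> f x \<and> f x \<le> g x \<and> g x < \<infinity>"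
    and "sum_list (map g xs) \<le> sum_list (map f xs)"
  shows "\<forall>x\<in>set xs. f x = g x"
  using assms
proof (induction xs)
  case Nil then show ?case by simp
next
  case (Cons a xs)
  have p: "0 \<le> f z \<and> f z \<le> g z \<and> g z < \<infinity>" if "z \<in> set xs" for z
    by (rule Cons.prems(1)) (simp add: that)
  have p2: "0 \<le> g z \<and> g z < \<infinity>" if "z \<in> set xs" for z
  proof -
    have "0 \<le> f z" "f z \<le> g z" "g z < \<infinity>" using p[OF that] by simp_all
    then show ?thesis using order_trans[of 0 "f z" "g z"] by simp
  qed
  have fin: "sum_list (map g xs) < \<infinity>" using p2 by (rule sl_fin)
  have le: "sum_list (map f xs) \<le> sum_list (map g xs)"
    using p by (intro sum_list_mono) blast
  have n0: "0 \<le> sum_list (map f xs)"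
  proof (rule sum_list_nonneg)
    fix y assume "y \<in> set (map f xs)"
    then obtain z where "z \<in> set xs" "y = f z" by auto
    then show "0 \<le> y" using p by simp
  qed
  have a0: "0 \<le> f a \<and> f a \<le> g a \<and> g a < \<infinity>" by (rule Cons.prems(1)) simp
  then have a: "0 \<le> f a" "f a \<le> g a" "g a < \<infinity>" by simp_all
  have s: "g a + sum_list (map g xs) \<le> f a + sum_list (map f xs)" using Cons.prems(2) by simp
  have fa: "f a < \<infinity>" by (rule order_le_less_trans[OF a(2) a(3)])
  have fu: "sum_list (map f xs) < \<infinity>" by (rule order_le_less_trans[OF le fin])
  have gv: "0 \<le> sum_list (map g xs)" by (rule order_trans[OF n0 le])
  have ga: "0 \<le> g a" by (rule order_trans[OF a(1) a(2)])
  obtain x where x: "f a = ereal x" using a(1) fa by (cases "f a") simp_all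
  obtain y where y: "g a = ereal y" using ga a(3) by (cases "g a") simp_all
  obtain u where u: "sum_list (map f xs) = ereal u" using n0 fu by (cases "sum_list (map f xs)") simp_all
  obtain v where v: "sum_list (map g xs) = ereal v" using gv fin by (cases "sum_list (map g xs)") simp_all
  have s': "y + v \<le> x + u" using s unfolding x y u v by simp
  have "x \<le> y" "u \<le> v" using a(2) le unfolding x y u v by simp_all
  then have "x = y" "v \<le> u" using s' by linarith+
  then have e1: "f a = g a" and e2: "sum_list (map g xs) \<le> sum_list (map f xs)"
    unfolding x y u v by simp_all
  have r: "\<forall>x\<in>set xs. f x = g x"
    by (rule Cons.IH[OF p e2])
  show ?case
  proof
    fix z assume "z \<in> set (a # xs)"
    then have "z = a \<or> z \<in> set xs" by simp
    then show "f z = g z" using r e1 by blast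
  qed
qed

theorem mainTheorem10:
  fixes C :: "'a::metric_space set set" and Ms :: "'a set list" and d :: "ereal list"
    and K1 K2 :: "'a set"
  assumes "finiteness_class C"
    and "set Ms \<subseteq> C"
    and "Sigma_min C Ms \<noteq> {}"
    and "d \<in> Omega C Ms"
    and "K1 \<in> Sigma_d C Ms d" and "K2 \<in> Sigma_d C Ms d"
    and "K1 \<subseteq> K2"
  shows "\<forall>K\<in>C. K1 \<subseteq> K \<and> K \<subseteq> K2 \<longrightarrow> K \<in> Sigma_d C Ms d"
proof (intro ballI impI)
  fix K assume KC: "K \<in> C" and KK: "K1 \<subseteq> K \<and> K \<subseteq> K2"
  have "\<exists>A\<in>PCl. C = {B\<in>PCl. hdist A B < \<infinity>}"
    using assms(1) unfolding finiteness_class_def .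
  then obtain A where A: "A \<in> PCl" and CA: "C = {B\<in>PCl. hdist A B < \<infinity>}"
    by (rule bexE)
  have An: "A \<noteq> {}" using A unfolding PCl_def by auto
  have fin: "hdist X Y < \<infinity>" if "X \<in> C" "Y \<in> C" for X Y
  proof -
    have "hdist X Y \<le> hdist X A + hdist A Y" using An by (rule hd_tri)
    moreover have "hdist X A < \<infinity>" "hdist A Y < \<infinity>" using that CA hd_sym[of X A] by auto
    then have "hdist X A + hdist A Y \<noteq> \<infinity>" by simp
    ultimately show ?thesis by (metis ereal_infty_less_eq(1) less_le_not_le linorder_not_le)
  qed
  have K1m: "K1 \<in> Sigma_min C Ms" and K1d: "dvec Ms K1 = d"
    using assms(5) unfolding Sigma_d_def by auto
  have K2m: "K2 \<in> Sigma_min C Ms" and K2d: "dvec Ms K2 = d"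
    using assms(6) unfolding Sigma_d_def by auto
  have K1C: "K1 \<in> C" using K1m unfolding Sigma_min_def by auto
  have Kne: "K \<noteq> {}" using KC CA unfolding PCl_def by auto
  have eq12: "hdist K1 Mi = hdist K2 Mi" if "Mi \<in> set Ms" for Mi
  proof -
    have "map (hdist K1) Ms = map (hdist K2) Ms" using K1d K2d unfolding dvec_def by simp
    then show ?thesis using that by (rule map_eq_conv[THEN iffD1, rule_format])
  qed
  have bound: "hdist K Mi \<le> hdist K1 Mi" if Mi: "Mi \<in> set Ms" for Mi
  proof -
    have "(SUP a\<in>K. pdist a Mi) \<le> (SUP a\<in>K2. pdist a Mi)"
      using KK by (intro SUP_subset_mono) auto
    also have "\<dots> \<le> hdist K2 Mi" unfolding hdist_def by simp
    finally have 1: "(SUP a\<in>K. pdist a Mi) \<le> hdist K1 Mi" using eq12[OF Mi] by simp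
    have "(SUP b\<in>Mi. pdist b K) \<le> (SUP b\<in>Mi. pdist b K1)"
      unfolding pdist_def using KK by (intro SUP_mono' INF_superset_mono) auto
    also have "\<dots> \<le> hdist K1 Mi" unfolding hdist_def by simp
    finally have 2: "(SUP b\<in>Mi. pdist b K) \<le> hdist K1 Mi" .
    show ?thesis using 1 2 unfolding hdist_def[of K Mi] by simp
  qed
  have SMle: "SM Ms K1 \<le> SM Ms K" using K1m KC unfolding Sigma_min_def by auto
  have eqs: "\<forall>Mi\<in>set Ms. hdist K Mi = hdist K1 Mi"
  proof (rule list_eq)
    fix Mi assume Mi: "Mi \<in> set Ms"
    show "0 \<le> hdist K Mi \<and> hdist K Mi \<le> hdist K1 Mi \<and> hdist K1 Mi < \<infinity>"
      using hd_nonneg[OF Kne] bound[OF Mi] fin[OF K1C] Mi assms(2) by auto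
  next
    show "sum_list (map (hdist K1) Ms) \<le> sum_list (map (hdist K) Ms)"
      using SMle unfolding SM_def by simp
  qed
  have mapeq: "map (\<lambda>Mi. hdist K Mi) Ms = map (\<lambda>Mi. hdist K1 Mi) Ms"
    using eqs by simp
  have SMeq: "SM Ms K = SM Ms K1" unfolding SM_def by (simp only: mapeq)
  have "K \<in> Sigma_min C Ms"
    using K1m KC SMeq unfolding Sigma_min_def by simp
  moreover have "dvec Ms K = d" using K1d unfolding dvec_def by (simp only: mapeq)
  ultimately show "K \<in> Sigma_d C Ms d" unfolding Sigma_d_def by auto
qed

end
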